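(* Let $(Q,\mathcal{K})$ be a learning space with $|Q|\ge 2$ and let $Q'$ be a proper non-empty subset of $Q$. The following are equivalent: (i) $Q'$ is yielding; (ii) every plus child of $\mathcal{K}$ (induced by $Q'$) is a learning space.
   Context: All sets are finite. A knowledge structure is a family $\mathcal{K}$ of subsets of $Q=\bigcup\mathcal{K}\neq\varnothing$ with $\varnothing\in\mathcal{K}$. A learning space is a knowledge structure satisfying: [L1] for $K\subset L$ in $\mathcal{K}$ with $|L\setminus K|=n$ there is a chain $K=K_0\subset\dots\subset K_n=L$ with $K_{i+1}=K_i\cup\{q_i\}\in\mathcal{K}$, $q_i\notin K_i$; [L2] if $K\subset L$ in $\mathcal{K}$ and $K\cup\{q\}\in\mathcal{K}$ with $q\notin K$ then $L\cup\{q\}\in\mathcal{K}$. For $Q'\subset Q$: $K\sim L$ iff $K\cap Q'=L\cap Q'$, with $[K]$ the equivalence class of $K$ in $\mathcal{K}$. The $Q'$-child determined by $K$ is $\mathcal{K}_{[K]}=\{L\setminus\bigcap[K]: L\in\mathcal{K}, L\sim K\}$; it is trivial if it equals $\{\varnothing\}$. For a non-trivial child, the plus child is $\mathcal{K}_{[K]}^+=\mathcal{K}_{[K]}\cup\{\varnothing\}$ (a learning space on its own union). $Q'$ is yielding if for every $K\in\mathcal{K}$ and every state $L$ minimal for inclusion in $[K]$, $|L\setminus\bigcap[K]|\le 1$. *)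

theory Defs
  imports Main
begin

text \<open>A knowledge structure: a family of (finite) subsets of the finite nonempty domain
  Q = \<Union>K, containing the empty set.\<close>
definition knowledge_structure :: "'a set set \<Rightarrow> bool" where
  "knowledge_structure \<K> \<longleftrightarrow> finite (\<Union>\<K>) \<and> \<Union>\<K> \<noteq> {} \<and> {} \<in> \<K>"

definition learning_smooth :: "'a set set \<Rightarrow> bool" where
  "learning_smooth \<K> \<longleftrightarrow>
     (\<forall>K\<in>\<K>. \<forall>L\<in>\<K>. K \<subseteq> L \<longrightarrow>
        (\<exists>f :: nat \<Rightarrow> 'a set. f 0 = K \<and> f (card (L - K)) = L \<and>
           (\<forall>i < card (L - K). f (Suc i) \<in> \<K> \<and>
              (\<exists>q. q \<notin> f i \<and> f (Suc i) = insert q (f i)))))"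

definition learning_consistent :: "'a set set \<Rightarrow> bool" where
  "learning_consistent \<K> \<longleftrightarrow>
     (\<forall>K\<in>\<K>. \<forall>L\<in>\<K>. \<forall>q. K \<subseteq> L \<and> q \<notin> K \<and> insert q K \<in> \<K> \<longrightarrow> insert q L \<in> \<K>)"

definition learning_space :: "'a set set \<Rightarrow> bool" where
  "learning_space \<K> \<longleftrightarrow> knowledge_structure \<K> \<and> learning_smooth \<K> \<and> learning_consistent \<K>"

definition eq_class :: "'a set set \<Rightarrow> 'a set \<Rightarrow> 'a set \<Rightarrow> 'a set set" where
  "eq_class \<K> Q' K = {L \<in> \<K>. L \<inter> Q' = K \<inter> Q'}"

definition child :: "'a set set \<Rightarrow> 'a set \<Rightarrow> 'a set \<Rightarrow> 'a set set" where
  "child \<K> Q' K = (\<lambda>L. L - \<Inter>(eq_class \<K> Q' K)) ` eq_class \<K> Q' K"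

definition trivial_child :: "'a set set \<Rightarrow> 'a set \<Rightarrow> 'a set \<Rightarrow> bool" where
  "trivial_child \<K> Q' K \<longleftrightarrow> child \<K> Q' K = {{}}"

definition plus_child :: "'a set set \<Rightarrow> 'a set \<Rightarrow> 'a set \<Rightarrow> 'a set set" where
  "plus_child \<K> Q' K = insert {} (child \<K> Q' K)"

definition yielding :: "'a set set \<Rightarrow> 'a set \<Rightarrow> bool" where
  "yielding \<K> Q' \<longleftrightarrow>
     (\<forall>K\<in>\<K>. \<forall>L\<in>eq_class \<K> Q' K.
        (\<not> (\<exists>M\<in>eq_class \<K> Q' K. M \<subset> L)) \<longrightarrow> card (L - \<Inter>(eq_class \<K> Q' K)) \<le> 1)"

end

theory Submission
  imports Defs
begin

lemma smooth_step:
  assumes "learning_smooth F" "A \<in> F" "B \<in> F" "A \<subset> B" "finite B"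
  shows "\<exists>q. q \<notin> A \<and> q \<in> B \<and> insert q A \<in> F"
proof -
  let ?n = "card (B - A)"
  have n: "?n > 0" using assms(4,5) by (auto simp add: card_gt_0_iff)
  have "A \<subseteq> B" using assms(4) by blast
  note ex = assms(1)[unfolded learning_smooth_def, rule_format, OF assms(2) assms(3) this]
  from ex obtain f where f0: "f 0 = A" and fn: "f ?n = B"
    and fs: "\<forall>i<?n. f (Suc i) \<in> F \<and> (\<exists>q. q \<notin> f i \<and> f (Suc i) = insert q (f i))"
    by (elim exE conjE)
  have mono: "f i \<subseteq> f j" if "i \<le> j" "j \<le> ?n" for i j using that
  proof (induction j)
    case 0 thus ?case by simp
  next
    case (Suc j)
    show ?case
    proof (cases "i = Suc j")
      case True then show ?thesis by simp
    next
      case False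
      then have "i \<le> j" using Suc.prems by simp
      with Suc.IH Suc.prems have "f i \<subseteq> f j" by simp
      moreover have "f j \<subseteq> f (Suc j)"
      proof -
        have "j < ?n" using Suc.prems by simp
        then obtain q where "f (Suc j) = insert q (f j)" using fs by blast
        then show ?thesis by blast
      qed
      ultimately show ?thesis by blast
    qed
  qed
  from fs n obtain q where q: "q \<notin> f 0" "f (Suc 0) = insert q (f 0)" "f (Suc 0) \<in> F" by blast
  have "f (Suc 0) \<subseteq> B" using mono[of "Suc 0" ?n] n fn by simp
  then show ?thesis using q f0 by auto
qed

lemma ls_union:
  assumes "learning_space F" "K \<in> F" "L \<in> F"
  shows "K \<union> L \<in> F"
proof -
  have ks: "{} \<in> F" and sm: "learning_smooth F" and lc: "learning_consistent F"
    using assms(1) unfolding learning_space_def knowledge_structure_def by auto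
  let ?n = "card (K - {})"
  note ex = sm[unfolded learning_smooth_def, rule_format, OF ks assms(2) empty_subsetI]
  from ex obtain f where f0: "f 0 = {}" and fn: "f ?n = K"
    and fs: "\<forall>i<?n. f (Suc i) \<in> F \<and> (\<exists>q. q \<notin> f i \<and> f (Suc i) = insert q (f i))"
    by (elim exE conjE)
  have "L \<union> f i \<in> F" if "i \<le> ?n" for i using that
  proof (induction i)
    case 0 then show ?case using f0 assms(3) by simp
  next
    case (Suc i)
    then have i: "i < ?n" by simp
    then obtain q where q: "q \<notin> f i" "f (Suc i) = insert q (f i)" and fsi: "f (Suc i) \<in> F"
      using fs by blast
    have fi: "f i \<in> F"
    proof (cases i)
      case 0 then show ?thesis using f0 ks by simp
    next
      case (Suc j) then show ?thesis using fs i by auto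
    qed
    have LU: "L \<union> f i \<in> F" using Suc.IH i by simp
    have "f i \<subseteq> L \<union> f i" by auto
    moreover have "insert q (f i) \<in> F" using q fsi by simp
    ultimately have "insert q (L \<union> f i) \<in> F"
      using lc fi LU q(1) unfolding learning_consistent_def by blast
    then show ?case using q by simp
  qed
  from this[of ?n] fn show ?thesis by (simp add: Un_commute)
qed

lemma step_smooth:
  assumes fin: "\<forall>A\<in>F. finite A"
    and st: "\<forall>A\<in>F. \<forall>B\<in>F. A \<subset> B \<longrightarrow> (\<exists>q. q \<notin> A \<and> q \<in> B \<and> insert q A \<in> F)"
  shows "learning_smooth F"
proof -
  have main: "\<forall>A\<in>F. A \<subseteq> B \<longrightarrow> card (B - A) = n \<longrightarrow>
     (\<exists>f::nat\<Rightarrow>'a set. f 0 = A \<and> f n = B \<and>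
        (\<forall>i<n. f (Suc i) \<in> F \<and> (\<exists>q. q \<notin> f i \<and> f (Suc i) = insert q (f i))))"
    if BF: "B \<in> F" for B n
  proof (induction n)
    case 0
    show ?case
    proof (intro ballI impI)
      fix A assume A: "A \<in> F" "A \<subseteq> B" "card (B - A) = 0"
      have "finite (B - A)" using fin BF by auto
      then have "A = B" using A by auto
      then show "\<exists>f::nat\<Rightarrow>'a set. f 0 = A \<and> f 0 = B \<and>
        (\<forall>i<0. f (Suc i) \<in> F \<and> (\<exists>q. q \<notin> f i \<and> f (Suc i) = insert q (f i)))"
        by (intro exI[of _ "\<lambda>_. A"]) simp
    qed
  next
    case (Suc n)
    show ?case
    proof (intro ballI impI)
      fix A assume A: "A \<in> F" "A \<subseteq> B" "card (B - A) = Suc n"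
      then have "A \<subset> B" by auto
      then obtain q where q: "q \<notin> A" "q \<in> B" "insert q A \<in> F" using st A(1) BF by blast
      have e: "B - insert q A = (B - A) - {q}" by auto
      have "card (B - insert q A) = n" unfolding e using A(3) q
        by (simp add: card_Diff_singleton)
      moreover have "insert q A \<subseteq> B" using q A by auto
      ultimately obtain g where g0: "g 0 = insert q A" and gn: "g n = B"
        and gs: "\<forall>i<n. g (Suc i) \<in> F \<and> (\<exists>q. q \<notin> g i \<and> g (Suc i) = insert q (g i))"
        using Suc.IH[rule_format, of "insert q A"] q by blast
      define f where "f = (\<lambda>i. if i = 0 then A else g (i - 1))"
      show "\<exists>f::nat\<Rightarrow>'a set. f 0 = A \<and> f (Suc n) = B \<and>
        (\<forall>i<Suc n. f (Suc i) \<in> F \<and> (\<exists>q. q \<notin> f i \<and> f (Suc i) = insert q (f i)))"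
      proof (intro exI[of _ f] conjI allI impI)
        show "f 0 = A" by (simp add: f_def)
        show "f (Suc n) = B" by (simp add: f_def gn)
      next
        fix i assume i: "i < Suc n"
        show "f (Suc i) \<in> F"
        proof (cases i)
          case 0 then show ?thesis using g0 q by (simp add: f_def)
        next
          case (Suc j) then show ?thesis using gs i by (simp add: f_def)
        qed
        show "\<exists>q. q \<notin> f i \<and> f (Suc i) = insert q (f i)"
        proof (cases i)
          case 0 then show ?thesis using g0 q by (auto simp add: f_def)
        next
          case (Suc j) then show ?thesis using gs i by (simp add: f_def)
        qed
      qed
    qed
  qed
  show ?thesis unfolding learning_smooth_def
  proof (intro ballI impI)
    fix K L assume "K \<in> F" "L \<in> F" "K \<subseteq> L"
    then show "\<exists>f :: nat \<Rightarrow> 'a set. f 0 = K \<and> f (card (L - K)) = L \<and>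
           (\<forall>i < card (L - K). f (Suc i) \<in> F \<and>
              (\<exists>q. q \<notin> f i \<and> f (Suc i) = insert q (f i)))"
      using main[of L "card (L - K)"] by blast
  qed
qed

theorem mainTheorem6:
  fixes \<K> :: "'a set set" and Q' :: "'a set"
  assumes "learning_space \<K>"
    and "card (\<Union>\<K>) \<ge> 2"
    and "Q' \<subset> \<Union>\<K>" and "Q' \<noteq> {}"
  shows "yielding \<K> Q' \<longleftrightarrow>
         (\<forall>K\<in>\<K>. \<not> trivial_child \<K> Q' K \<longrightarrow> learning_space (plus_child \<K> Q' K))"
proof
  have finU: "finite (\<Union>\<K>)" using assms(1) unfolding learning_space_def knowledge_structure_def by auto
  have finM: "finite M" if "M \<in> \<K>" for M using finU that by (meson Union_upper finite_subset)
  have smK: "learning_smooth \<K>" using assms(1) unfolding learning_space_def by auto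
  {
    assume Y: "yielding \<K> Q'"
    show "\<forall>K\<in>\<K>. \<not> trivial_child \<K> Q' K \<longrightarrow> learning_space (plus_child \<K> Q' K)"
    proof (intro ballI impI)
      fix K assume KK: "K \<in> \<K>" and nt: "\<not> trivial_child \<K> Q' K"
      define C where "C = eq_class \<K> Q' K"
      define I where "I = \<Inter>C"
      have childeq: "child \<K> Q' K = (\<lambda>L. L - I) ` C" unfolding child_def C_def I_def by simp
      have P: "plus_child \<K> Q' K = insert {} ((\<lambda>L. L - I) ` C)"
        unfolding plus_child_def childeq by simp
      have Cin: "M \<in> \<K> \<and> M \<inter> Q' = K \<inter> Q'" if "M \<in> C" for M
        using that by (simp add: C_def eq_class_def)
      have KC: "K \<in> C" using KK by (simp add: C_def eq_class_def)
      have IM: "I \<subseteq> M" if "M \<in> C" for M using that unfolding I_def by blast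
      have Cun: "M \<union> N \<in> C" if "M \<in> C" "N \<in> C" for M N
      proof -
        have "M \<union> N \<in> \<K>" using ls_union[OF assms(1)] Cin that by blast
        moreover have "(M \<union> N) \<inter> Q' = K \<inter> Q'" using Cin that by blast
        ultimately show ?thesis by (simp add: C_def eq_class_def)
      qed
      have Cstep: "\<exists>q. q \<notin> M \<and> q \<in> N \<and> insert q M \<in> C"
        if h: "M \<in> C" "N \<in> C" "M \<subset> N" for M N
      proof -
        have "M \<in> \<K>" "N \<in> \<K>" using Cin h by auto
        then obtain q where q: "q \<notin> M" "q \<in> N" "insert q M \<in> \<K>"
          using smooth_step[OF smK, of M N] h finM by blast
        have "insert q M \<inter> Q' = K \<inter> Q'" using Cin[OF h(1)] Cin[OF h(2)] q h(3) by blast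
        then show ?thesis using q unfolding C_def eq_class_def by blast
      qed
      have Cmin: "\<exists>M\<in>C. M \<subseteq> N \<and> \<not> (\<exists>M'\<in>C. M' \<subset> M)" if h: "N \<in> C" for N
      proof -
        have "finite N" using finM Cin h by blast
        then have "finite {M \<in> C. M \<subseteq> N}"
          by (metis (no_types, lifting) Finite_Set.finite_Pow_iff finite_subset mem_Collect_eq PowI subsetI)
        then obtain M where M: "M \<in> {M \<in> C. M \<subseteq> N}" "M \<subseteq> N"
          "\<forall>b\<in>{M \<in> C. M \<subseteq> N}. b \<subseteq> M \<longrightarrow> M = b"
          using finite_has_minimal2[of "{M \<in> C. M \<subseteq> N}" N] h by auto
        have MC: "M \<in> C" using M(1) by simp
        have "\<not> (\<exists>M'\<in>C. M' \<subset> M)"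
        proof
          assume "\<exists>M'\<in>C. M' \<subset> M"
          then obtain M' where "M' \<in> C" "M' \<subset> M" by blast
          then have "M' \<in> {M \<in> C. M \<subseteq> N}" "M' \<subseteq> M" "M \<noteq> M'" using M(2) by auto
          then show False using M(3) by blast
        qed
        then show ?thesis using MC M(2) by blast
      qed
      have Ymin: "card (M - I) \<le> 1" if "M \<in> C" "\<not> (\<exists>M'\<in>C. M' \<subset> M)" for M
        using Y KK that unfolding yielding_def C_def I_def by blast
      have finC: "finite M" if "M \<in> C" for M using Cin finM that by blast
      have ks: "knowledge_structure (plus_child \<K> Q' K)"
        unfolding knowledge_structure_def P
      proof (intro conjI)
        have "\<Union>(insert {} ((\<lambda>L. L - I) ` C)) \<subseteq> \<Union>\<K>" using Cin by blast
        then show "finite (\<Union>(insert {} ((\<lambda>L. L - I) ` C)))" using finU finite_subset by blast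
        have "(\<lambda>L. L - I) ` C \<noteq> {{}}" using nt childeq unfolding trivial_child_def by simp
        moreover have "(\<lambda>L. L - I) ` C \<noteq> {}" using KC by blast
        ultimately obtain X where "X \<in> (\<lambda>L. L - I) ` C" "X \<noteq> {}" by blast
        then show "\<Union>(insert {} ((\<lambda>L. L - I) ` C)) \<noteq> {}" by blast
      qed simp
      have sm: "learning_smooth (plus_child \<K> Q' K)"
        unfolding P
      proof (rule step_smooth)
        show "\<forall>A\<in>insert {} ((\<lambda>L. L - I) ` C). finite A" using finC by auto
        show "\<forall>A\<in>insert {} ((\<lambda>L. L - I) ` C). \<forall>B\<in>insert {} ((\<lambda>L. L - I) ` C). A \<subset> B \<longrightarrow>
           (\<exists>q. q \<notin> A \<and> q \<in> B \<and> insert q A \<in> insert {} ((\<lambda>L. L - I) ` C))"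
        proof (intro ballI impI)
          fix A B assume A: "A \<in> insert {} ((\<lambda>L. L - I) ` C)" and B: "B \<in> insert {} ((\<lambda>L. L - I) ` C)"
            and AB: "A \<subset> B"
          then have "B \<noteq> {}" by blast
          then obtain N where N: "N \<in> C" "B = N - I" using B by blast
          show "\<exists>q. q \<notin> A \<and> q \<in> B \<and> insert q A \<in> insert {} ((\<lambda>L. L - I) ` C)"
          proof (cases "A \<in> (\<lambda>L. L - I) ` C")
            case True
            then obtain M where M: "M \<in> C" "A = M - I" by blast
            have "M \<subset> N" using IM[OF M(1)] IM[OF N(1)] M N AB by blast
            then obtain q where q: "q \<notin> M" "q \<in> N" "insert q M \<in> C" using Cstep M N by blast
            have "insert q A = insert q M - I" using q IM[OF M(1)] M by blast
            then show ?thesis using q M N IM[OF M(1)] by blast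
          next
            case False
            then have A0: "A = {}" using A by blast
            obtain M where M: "M \<in> C" "M \<subseteq> N" "\<not> (\<exists>M'\<in>C. M' \<subset> M)" using Cmin N by blast
            have c: "card (M - I) \<le> 1" using Ymin M by blast
            have fMI: "finite (M - I)" using finC M by blast
            have "M - I \<noteq> {}" using False A0 M by blast
            then have "card (M - I) > 0" using fMI by (simp add: card_gt_0_iff)
            then have "card (M - I) = 1" using c by linarith
            then obtain q where "M - I = {q}" by (rule card_1_singletonE)
            then show ?thesis using A0 M N by blast
          qed
        qed
      qed
      have lc: "learning_consistent (plus_child \<K> Q' K)"
        unfolding P learning_consistent_def
      proof (intro ballI allI impI)
        fix A B q assume A: "A \<in> insert {} ((\<lambda>L. L - I) ` C)" and B: "B \<in> insert {} ((\<lambda>L. L - I) ` C)"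
          and h: "A \<subseteq> B \<and> q \<notin> A \<and> insert q A \<in> insert {} ((\<lambda>L. L - I) ` C)"
        then obtain M' where M': "M' \<in> C" "insert q A = M' - I" by blast
        show "insert q B \<in> insert {} ((\<lambda>L. L - I) ` C)"
        proof (cases "B = {}")
          case True then show ?thesis using h M' by auto
        next
          case False
          then obtain N where N: "N \<in> C" "B = N - I" using B by blast
          have "(M' \<union> N) - I = insert q B" using M' N h by blast
          then show ?thesis using Cun[OF M'(1) N(1)] by blast
        qed
      qed
      show "learning_space (plus_child \<K> Q' K)" using ks sm lc unfolding learning_space_def by blast
    qed
  }
  {
    assume H: "\<forall>K\<in>\<K>. \<not> trivial_child \<K> Q' K \<longrightarrow> learning_space (plus_child \<K> Q' K)"
    show "yielding \<K> Q'" unfolding yielding_def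
    proof (intro ballI impI)
      fix K L assume KK: "K \<in> \<K>" and L: "L \<in> eq_class \<K> Q' K"
        and nm: "\<not> (\<exists>M\<in>eq_class \<K> Q' K. M \<subset> L)"
      define C where "C = eq_class \<K> Q' K"
      define I where "I = \<Inter>C"
      have childeq: "child \<K> Q' K = (\<lambda>L. L - I) ` C" unfolding child_def C_def I_def by simp
      have P: "plus_child \<K> Q' K = insert {} ((\<lambda>L. L - I) ` C)"
        unfolding plus_child_def childeq by simp
      have IM: "I \<subseteq> M" if "M \<in> C" for M using that unfolding I_def by blast
      have LC: "L \<in> C" using L C_def by simp
      have finL: "finite (L - I)" using finM L by (simp add: eq_class_def)
      show "card (L - \<Inter> (eq_class \<K> Q' K)) \<le> 1"
      proof (rule ccontr)
        assume "\<not> card (L - \<Inter> (eq_class \<K> Q' K)) \<le> 1"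
        then have c: "card (L - I) \<ge> 2" unfolding I_def C_def by simp
        then have ne: "L - I \<noteq> {}" by (intro notI) simp
        have LIc: "L - I \<in> (\<lambda>L. L - I) ` C" using LC by (rule imageI)
        have "(\<lambda>L. L - I) ` C \<noteq> {{}}"
        proof
          assume "(\<lambda>L. L - I) ` C = {{}}"
          then have "L - I = {}" using LIc by simp
          then show False using ne by simp
        qed
        then have "\<not> trivial_child \<K> Q' K"
          unfolding trivial_child_def childeq .
        then have "learning_space (plus_child \<K> Q' K)" using H KK by blast
        then have ls: "learning_space (insert {} ((\<lambda>L. L - I) ` C))" unfolding P .
        then have smP: "learning_smooth (insert {} ((\<lambda>L. L - I) ` C))" unfolding learning_space_def by blast
        have e1: "{} \<in> insert {} ((\<lambda>L. L - I) ` C)" by simp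
        have e2: "L - I \<in> insert {} ((\<lambda>L. L - I) ` C)" using LIc by simp
        have e3: "{} \<subset> L - I" using ne by blast
        obtain q where q: "q \<in> L - I" "insert q {} \<in> insert {} ((\<lambda>L. L - I) ` C)"
          using smooth_step[OF smP e1 e2 e3 finL] by blast
        then have "{q} \<in> (\<lambda>L. L - I) ` C" by simp
        then obtain M where M: "M \<in> C" "{q} = M - I" by blast
        have "M \<subseteq> L"
        proof
          fix x assume x: "x \<in> M"
          show "x \<in> L"
          proof (cases "x \<in> I")
            case True then show ?thesis using IM[OF LC] by blast
          next
            case False
            then have "x \<in> M - I" using x by blast
            then have "x = q" using M(2) by (metis singletonD)
            then show ?thesis using q(1) by blast
          qed
        qed
        moreover have "M \<noteq> L"
        proof
          assume "M = L"
          then have "card (L - I) = 1" using M(2)[symmetric] by simp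
          then show False using c by simp
        qed
        ultimately have "M \<subset> L" by blast
        then show False using nm M(1) unfolding C_def by blast
      qed
    qed
  }
qed

end
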